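(* The $q$-Schröder numbers $r_n(q)=\sum_{k=0}^n\binom{n+k}{n-k}C_kq^{n-k}$, $n\ge0$, where $C_k=\frac{1}{k+1}\binom{2k}{k}$ is the $k$-th Catalan number, form a $q$-log-convex sequence.
   Context: For real polynomials $f,g$ write $f\le_q g$ if $g-f$ has nonnegative coefficients; a sequence $\{P_n(q)\}_{n\ge0}$ is $q$-log-convex if $P_n(q)^2\le_q P_{n-1}(q)P_{n+1}(q)$ for all $n\ge 1$. *)

theory Defs
  imports "HOL-Computational_Algebra.Polynomial"
begin

definition q_le :: "real poly \<Rightarrow> real poly \<Rightarrow> bool" where
  "q_le f g \<longleftrightarrow> (\<forall>i. coeff (g - f) i \<ge> 0)"

definition q_log_convex :: "(nat \<Rightarrow> real poly) \<Rightarrow> bool" where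
  "q_log_convex P \<longleftrightarrow> (\<forall>n\<ge>1. q_le ((P n)^2) (P (n - 1) * P (n + 1)))"

definition catalan :: "nat \<Rightarrow> real" where
  "catalan k = real ((2*k) choose k) / real (k + 1)"

definition q_schroeder :: "nat \<Rightarrow> real poly" where
  "q_schroeder n = (\<Sum>k=0..n. monom (real ((n + k) choose (n - k)) * catalan k) (n - k))"

end

theory Submission
  imports Defs
begin


definition Phi :: "real poly poly" where "Phi = [:1, [:2,1:], [:1,1:]:]"
definition Psi :: "real poly poly" where "Psi = [:1, 0, -[:1,1:]:]"
definition X :: "nat \<Rightarrow> real poly poly" where "X n = Phi^n * Psi"
definition bb :: "nat \<Rightarrow> nat \<Rightarrow> real poly" where
  "bb n k = (if k \<le> n then coeff (X n) (n-k) else 0)"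

lemma coeff_Phi_mult: "coeff (Phi * p) L = coeff p L + (if L = 0 then 0 else [:2,1:] * coeff p (L-1))
   + (if L < 2 then 0 else [:1,1:] * coeff p (L-2))"
proof -
  have "Phi * p = p + pCons 0 (smult [:2,1:] p + pCons 0 (smult [:1,1:] p))"
    by (simp add: Phi_def)
  then have e: "coeff (Phi * p) L = coeff (p + pCons 0 (smult [:2,1:] p + pCons 0 (smult [:1,1:] p))) L"
    by simp
  show ?thesis
  proof (cases L)
    case 0
    then show ?thesis unfolding e by (simp del: mult_pCons_left)
  next
    case (Suc j)
    then show ?thesis unfolding e by (cases j) (simp_all del: mult_pCons_left add: algebra_simps)
  qed
qed

lemma coeff_x_mult: "coeff ([:0,1:] * (p::real poly poly)) L = (if L = 0 then 0 else coeff p (L-1))"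
  by (cases L) auto

lemma Psi_eq: "Psi = Phi - [:0,1:] * pderiv Phi"
  by (simp add: Phi_def Psi_def pderiv_pCons)

lemma key: "of_nat (Suc n) * coeff (X n) L = of_nat (Suc n) * coeff (Phi^Suc n) L - of_nat L * coeff (Phi^Suc n) L"
proof -
  have "smult (of_nat (Suc n)) (X n) = smult (of_nat (Suc n)) (Phi^Suc n) - [:0,1:] * pderiv (Phi^Suc n)"
  proof -
    have "X n = Phi^Suc n - [:0,1:] * (Phi^n * pderiv Phi)"
      unfolding X_def Psi_eq by (simp add: algebra_simps)
    then show ?thesis unfolding pderiv_power_Suc
      by (simp only: smult_diff_right mult_smult_left mult_smult_right)
  qed
  then have "coeff (smult (of_nat (Suc n)) (X n)) L = coeff (smult (of_nat (Suc n)) (Phi^Suc n) - [:0,1:] * pderiv (Phi^Suc n)) L"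
    by simp
  also have "\<dots> = of_nat (Suc n) * coeff (Phi^Suc n) L - of_nat L * coeff (Phi^Suc n) L"
    by (cases L) (simp_all add: coeff_x_mult coeff_pderiv)
  finally show ?thesis by simp
qed

lemma X_top: "coeff (X n) (Suc n) = 0"
proof -
  have "of_nat (Suc n) * coeff (X n) (Suc n) = (0::real poly)"
    using key[of n "Suc n"] by simp
  moreover have "(of_nat (Suc n) :: real poly) \<noteq> 0" by (simp add: of_nat_poly)
  ultimately show ?thesis by simp
qed

lemma X_Suc: "X (Suc n) = Phi * X n"
  by (simp add: X_def mult.assoc)

lemma XS: "coeff (X (Suc n)) L = coeff (X n) L + (if L = 0 then 0 else [:2,1:] * coeff (X n) (L-1))
   + (if L < 2 then 0 else [:1,1:] * coeff (X n) (L-2))"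
  by (simp only: X_Suc coeff_Phi_mult)

lemma bb_0: "bb 0 k = (if k = 0 then 1 else 0)"
  by (simp add: bb_def X_def Psi_def)

lemma bb_Suc: "bb (Suc n) k = (if k = 0 then 0 else bb n (k-1)) + [:2,1:] * bb n k + [:1,1:] * bb n (Suc k)"
proof (cases k)
  case 0
  then show ?thesis
    unfolding bb_def XS[of n] by (cases n) (simp_all add: X_top)
next
  case (Suc k')
  show ?thesis
  proof (cases "k' \<le> n")
    case True
    have L: "Suc n - k = n - k'" using Suc by simp
    show ?thesis unfolding bb_def XS[of n] L using True Suc
      by (auto simp: diff_diff_add Suc_diff_Suc)
  next
    case False
    then show ?thesis using Suc by (simp add: bb_def)
  qed
qed

lemma col0: "bb m 0 = smult (1 / real (Suc m)) (coeff (Phi^Suc m) m)"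
proof -
  have "of_nat (Suc m) * coeff (X m) m = coeff (Phi^Suc m) m"
    using key[of m m] by (simp add: algebra_simps)
  then have "smult (real (Suc m)) (coeff (X m) m) = coeff (Phi^Suc m) m"
    by (simp add: of_nat_poly)
  then have "coeff (X m) m = smult (1 / real (Suc m)) (coeff (Phi^Suc m) m)"
    by (metis (no_types, lifting) of_nat_Suc of_nat_neq_0 nonzero_divide_eq_eq smult_smult smult_1_left divide_self_if mult.commute times_divide_eq_left div_by_1)
  then show ?thesis by (simp add: bb_def)
qed



lemma coeff_lin_pow: "coeff ([:1,1:]^M :: 'a::comm_semiring_1 poly) j = of_nat (M choose j)"
proof (cases "j \<le> M")
  case True then show ?thesis using coeff_linear_poly_power[of j M 1 1] by simp
next
  case False
  then have "degree ([:1,1:]^M :: 'a poly) < j"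
    by (simp add: degree_linear_power)
  then show ?thesis using False by (simp add: coeff_eq_0 binomial_eq_0)
qed

lemma Phi_split: "Phi = [:1,1:]^2 + [:[:0,1:]:] * ([:0,1:] * [:1,1:])"
proof -
  have "[:2,1:] = (2::real poly) + [:0,1:]" by (simp add: numeral_poly)
  moreover have "[:1,1:] = (1::real poly) + [:0,1:]" by (simp add: one_pCons)
  ultimately show ?thesis by (simp add: Phi_def numeral_2_eq_2)
qed

lemma Phi_pow: "Phi^N = (\<Sum>i\<le>N. of_nat (N choose i) * ([:[:0,1:]^i:] * (monom 1 i * [:1,1:]^(2*N-i))))"
proof -
  have "Phi^N = ([:[:0,1:]:] * ([:0,1:] * [:1,1:]) + [:1,1:]^2)^N" by (simp add: Phi_split add.commute)
  also have "\<dots> = (\<Sum>i\<le>N. of_nat (N choose i) * ([:[:0,1:]:] * ([:0,1:] * [:1,1:]))^i * ([:1,1:]^2)^(N-i))"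
    by (rule binomial_ring)
  also have "\<dots> = (\<Sum>i\<le>N. of_nat (N choose i) * ([:[:0,1:]^i:] * (monom 1 i * [:1,1:]^(2*N-i))))"
  proof (rule sum.cong[OF refl])
    fix i assume "i \<in> {..N}"
    then have iN: "i \<le> N" by simp
    have a: "([:1,1:]::real poly poly)^i * ([:1,1:]^2)^(N-i) = [:1,1:]^(2*N-i)"
    proof -
      have eq: "i + 2*(N-i) = 2*N - i" using iN by simp
      show ?thesis by (simp add: power_mult[symmetric] power_add[symmetric] eq)
    qed
    have b: "([:0,1:]::real poly poly)^i = monom 1 i" by (simp add: monom_altdef)
    have c: "([:[:0,1:]:] :: real poly poly)^i = [:[:0,1:]^i:]"
      by (induct i) (simp_all add: algebra_simps)
    show "of_nat (N choose i) * ([:[:0,1:]:] * ([:0,1:] * [:1,1:]))^i * (([:1,1:]::real poly poly)^2)^(N-i) =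
      of_nat (N choose i) * ([:[:0,1:]^i:] * (monom 1 i * [:1,1:]^(2*N-i)))"
    proof -
      have Bi: "([:[:0,1:]:] * ([:0,1:] * [:1,1:]))^i = [:[:0,1:]^i:] * (monom 1 i * ([:1,1:]::real poly poly)^i)"
        unfolding power_mult_distrib c b by (simp only: mult.assoc)
      show ?thesis by (subst Bi, subst a[symmetric], simp only: mult.assoc)
    qed
  qed
  finally show ?thesis .
qed

lemma coeff_Phi_pow: "coeff (Phi^N) L = (\<Sum>i\<le>N. monom (real (N choose i) * (if i \<le> L then real ((2*N-i) choose (L-i)) else 0)) i)"
  unfolding Phi_pow coeff_sum
proof (rule sum.cong[OF refl])
  fix i
  show "coeff (of_nat (N choose i) * ([:[:0,1:]^i:] * (monom 1 i * [:1,1:]^(2*N-i)))) L =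
     monom (real (N choose i) * (if i \<le> L then real ((2*N-i) choose (L-i)) else 0)) i"
  proof -
    have m: "([:0,1:]::real poly)^i = monom 1 i" by (simp add: monom_altdef)
    show ?thesis unfolding m
      by (simp add: coeff_monom_mult coeff_lin_pow of_nat_poly[where 'a="real poly poly"] of_nat_monom mult_monom)
  qed
qed

lemma coeff2_Phi_pow: "coeff (coeff (Phi^N) L) j = real (N choose j) * (if j \<le> L then real ((2*N-j) choose (L-j)) else 0)"
  unfolding coeff_Phi_pow coeff_sum
  by (simp add: coeff_monom)



lemma ident_mid: "real (p+J+2) * (real ((2*p+J+3) choose (J+1)) * catalan (p+1)) =
  real ((p+J+2) choose (J+1)) * real ((2*p+J+3) choose p) + real ((p+J+2) choose J) * real ((2*p+J+4) choose (p+1))"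
proof -
  define W where "W = (fact (2*p+J+3) :: real)"
  define Z where "Z = (fact (p+J+2) :: real)"
  define E where "E = (fact (2*p+2) :: real)"
  define fJ where "fJ = (fact J :: real)"
  define fp where "fp = (fact p :: real)"
  have pos: "W > 0" "Z > 0" "E > 0" "fJ > 0" "fp > 0" by (simp_all add: W_def Z_def E_def fJ_def fp_def)
  have fJ1: "(fact (J+1) :: real) = (J+1) * fJ" by (simp add: fJ_def)
  have fp1: "(fact (p+1) :: real) = (p+1) * fp" by (simp add: fp_def)
  have fp2: "(fact (p+2) :: real) = (real p + 2) * ((real p + 1) * fp)" by (simp add: fp_def numeral_2_eq_2 algebra_simps)
  have Z3: "(fact (p+J+3) :: real) = (p+J+3) * Z"
  proof -
    have "p+J+3 = Suc (p+J+2)" by simp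
    then show ?thesis by (simp only: Z_def fact_Suc; simp)
  qed
  have W4: "(fact (2*p+J+4) :: real) = (2*p+J+4) * W"
  proof -
    have "2*p+J+4 = Suc (2*p+J+3)" by simp
    then show ?thesis by (simp only: W_def fact_Suc; simp)
  qed
  have b1: "real ((2*p+J+3) choose (J+1)) = W / ((J+1) * fJ * E)"
  proof -
    have "real ((2*p+J+3) choose (J+1)) = fact (2*p+J+3) / (fact (J+1) * fact (2*p+J+3 - (J+1)))"
      by (rule binomial_fact) simp
    also have "2*p+J+3 - (J+1) = 2*p+2" by simp
    finally show ?thesis unfolding fJ1 W_def E_def by simp
  qed
  have cat: "catalan (p+1) = E / ((p+1) * fp * ((p+1) * fp) * (p+2))"
  proof -
    have "real ((2*(p+1)) choose (p+1)) = fact (2*(p+1)) / (fact (p+1) * fact (2*(p+1) - (p+1)))"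
      by (rule binomial_fact) simp
    also have "2*(p+1) - (p+1) = p+1" by simp
    also have "2*(p+1) = 2*p+2" by simp
    finally show ?thesis unfolding catalan_def fp1 E_def by (simp add: field_simps)
  qed
  have b2: "real ((p+J+2) choose (J+1)) = Z / ((J+1) * fJ * ((p+1) * fp))"
  proof -
    have "real ((p+J+2) choose (J+1)) = fact (p+J+2) / (fact (J+1) * fact (p+J+2 - (J+1)))"
      by (rule binomial_fact) simp
    also have "p+J+2 - (J+1) = p+1" by simp
    finally show ?thesis unfolding fJ1 fp1 Z_def by simp
  qed
  have b3: "real ((2*p+J+3) choose p) = W / (fp * ((p+J+3) * Z))"
  proof -
    have "real ((2*p+J+3) choose p) = fact (2*p+J+3) / (fact p * fact (2*p+J+3 - p))"
      by (rule binomial_fact) simp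
    also have "2*p+J+3 - p = p+J+3" by simp
    finally show ?thesis unfolding Z3 fp_def W_def by simp
  qed
  have b4: "real ((p+J+2) choose J) = Z / (fJ * ((real p + 2) * ((real p + 1) * fp)))"
  proof -
    have "real ((p+J+2) choose J) = fact (p+J+2) / (fact J * fact (p+J+2 - J))"
      by (rule binomial_fact) simp
    also have "p+J+2 - J = p+2" by simp
    finally show ?thesis unfolding fp2 fJ_def Z_def by simp
  qed
  have b5: "real ((2*p+J+4) choose (p+1)) = (2*p+J+4) * W / ((p+1) * fp * ((p+J+3) * Z))"
  proof -
    have "real ((2*p+J+4) choose (p+1)) = fact (2*p+J+4) / (fact (p+1) * fact (2*p+J+4 - (p+1)))"
      by (rule binomial_fact) simp
    also have "2*p+J+4 - (p+1) = p+J+3" by simp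
    finally show ?thesis unfolding W4 fp1 Z3 by simp
  qed
  have poly: "real (p+J+2) * (real p + J + 3) = (p+1)*(p+2) + (2*p+J+4)*(J+1)" by (simp add: algebra_simps)
  have nz: "real p + 1 > 0" "real p + 2 > 0" "real J + 1 > 0" "real p + real J + 3 > 0" "2 * real p + real J + 4 > 0"
    by simp_all
  define x where "x = real p"
  define y where "y = real J"
  have x0: "x \<ge> 0" and y0: "y \<ge> 0" by (simp_all add: x_def y_def)
  have rat: "(x+y+2)/((y+1)*((x+1)*(x+1))*(x+2)) = 1/((y+1)*(x+1)*(x+y+3)) + (2*x+y+4)/((x+2)*((x+1)*(x+1))*(x+y+3))"
  proof -
    have a: "x+1 > 0" "x+2>0" "y+1>0" "x+y+3>0" using x0 y0 by simp_all
    have frac3: "\<And>a b c d e f. (b::real) \<noteq> 0 \<Longrightarrow> d \<noteq> 0 \<Longrightarrow> f \<noteq> 0 \<Longrightarrow> a*d*f = c*b*f + e*b*d \<Longrightarrow> a/b = c/d + e/f"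
      by (simp add: field_simps)
    have n1: "(y+1)*((x+1)*(x+1))*(x+2) > 0" using a by (intro mult_pos_pos) auto
    have n2: "(y+1)*(x+1)*(x+y+3) > 0" using a by (intro mult_pos_pos) auto
    have n3: "(x+2)*((x+1)*(x+1))*(x+y+3) > 0" using a by (intro mult_pos_pos) auto
    show ?thesis using n1 n2 n3 by (intro frac3) (simp_all add: algebra_simps)
  qed
  have pos': "W \<noteq> 0" "Z \<noteq> 0" "E \<noteq> 0" "fJ \<noteq> 0" "fp \<noteq> 0" using pos by auto
  have nz': "real p + 2 \<noteq> 0" "real p + 1 \<noteq> 0" "real p + real J + 3 \<noteq> 0" "real J + 1 \<noteq> 0"
    "real p + real J + 2 \<noteq> 0" "2 * real p + real J + 4 \<noteq> 0" by linarith+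
  have frac_eq: "\<And>a b c d. (b::real) \<noteq> 0 \<Longrightarrow> d \<noteq> 0 \<Longrightarrow> a*d = c*b \<Longrightarrow> a/b = c/d"
    by (simp add: field_simps)
  have nzx: "x + 1 \<noteq> 0" "x + 2 \<noteq> 0" "y + 1 \<noteq> 0" "x + y + 3 \<noteq> 0" using x0 y0 by linarith+
  have pJ2: "real (p+J+2) = x + y + 2" "real (p+J+3) = x+y+3" "real (2*p+J+4) = 2*x+y+4"
     "real J + 1 = y + 1" "real p + 1 = x + 1" "real p + 2 = x + 2"
    by (simp_all add: x_def y_def)
  have L: "real (p+J+2) * (W / ((J+1) * fJ * E) * (E / ((p+1) * fp * ((p+1) * fp) * (p+2)))) =
     W/(fJ*fp*fp) * ((x+y+2)/((y+1)*((x+1)*(x+1))*(x+2)))"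
    unfolding x_def y_def
    apply (simp only: times_divide_times_eq times_divide_eq_right times_divide_eq_left divide_divide_eq_left)
    by (rule frac_eq) (simp add: pos' nz', simp add: pos' nz', simp add: algebra_simps)
  have R1: "Z / ((J+1) * fJ * ((p+1) * fp)) * (W / (fp * ((p+J+3) * Z))) = W/(fJ*fp*fp) * (1/((y+1)*(x+1)*(x+y+3)))"
    unfolding x_def y_def
    apply (simp only: times_divide_times_eq times_divide_eq_right times_divide_eq_left divide_divide_eq_left)
    by (rule frac_eq) (simp add: pos' nz', simp add: pos' nz', simp add: algebra_simps)
  have R2: "Z / (fJ * ((real p + 2) * ((real p + 1) * fp))) * ((2*p+J+4) * W / ((p+1) * fp * ((p+J+3) * Z)))
     = W/(fJ*fp*fp) * ((2*x+y+4)/((x+2)*((x+1)*(x+1))*(x+y+3)))"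
    unfolding x_def y_def
    apply (simp only: times_divide_times_eq times_divide_eq_right times_divide_eq_left divide_divide_eq_left)
    by (rule frac_eq) (simp add: pos' nz', simp add: pos' nz', simp add: algebra_simps)
  show ?thesis unfolding b1 b2 b3 b4 b5 cat L R1 R2 rat
    by (simp only: distrib_left)
qed



definition nn :: "real poly \<Rightarrow> bool" where "nn p \<longleftrightarrow> (\<forall>i. 0 \<le> coeff p i)"

lemma nn_add: "nn p \<Longrightarrow> nn q \<Longrightarrow> nn (p + q)"
  by (simp add: nn_def)

lemma nn_mult: "nn p \<Longrightarrow> nn q \<Longrightarrow> nn (p * q)"
  unfolding nn_def coeff_mult by (auto intro!: sum_nonneg mult_nonneg_nonneg)

lemma nn_sum: "(\<And>i. i \<in> A \<Longrightarrow> nn (f i)) \<Longrightarrow> nn (\<Sum>i\<in>A. f i)"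
  unfolding nn_def coeff_sum by (auto intro!: sum_nonneg)

lemma nn_0: "nn 0" by (simp add: nn_def)
lemma nn_1: "nn 1" by (simp add: nn_def coeff_1)

lemma nn_lin: "a \<ge> 0 \<Longrightarrow> b \<ge> 0 \<Longrightarrow> nn [:a, b:]"
  by (simp add: nn_def coeff_pCons split: nat.split)

lemma bb_nn: "nn (bb n k)"
proof (induction n arbitrary: k)
  case 0 then show ?case by (simp add: bb_0 nn_0 nn_1)
next
  case (Suc n)
  show ?case unfolding bb_Suc
    by (intro nn_add nn_mult nn_lin Suc) (simp_all add: nn_0 Suc)
qed

definition JJ :: "nat \<Rightarrow> nat \<Rightarrow> real poly" where
  "JJ p k = (if Suc p = k then 1 else if p = k then [:2,1:] else if p = Suc k then [:1,1:] else 0)"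

lemma JJ_nn: "nn (JJ p k)"
  by (simp add: JJ_def nn_0 nn_1 nn_lin)

lemma row_sum: assumes "Suc k < N" shows "bb (Suc n) k = (\<Sum>p<N. bb n p * JJ p k)"
proof -
  have "(\<Sum>p<N. bb n p * JJ p k) = (\<Sum>p<N. (if k = 0 then 0 else (if p = k - 1 then bb n p else 0))
      + (if p = k then [:2,1:] * bb n p else 0) + (if p = Suc k then [:1,1:] * bb n p else 0))"
    by (rule sum.cong) (auto simp: JJ_def)
  also have "\<dots> = (if k = 0 then 0 else bb n (k-1)) + [:2,1:] * bb n k + [:1,1:] * bb n (Suc k)"
    using assms by (simp add: sum.distrib)
  finally show ?thesis by (simp add: bb_Suc)
qed

lemma CB:
  fixes x y :: "nat \<Rightarrow> 'a::comm_ring_1"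
  shows "(\<Sum>p<N. x p * J p k) * (\<Sum>p<N. y p * J p l) - (\<Sum>p<N. x p * J p l) * (\<Sum>p<N. y p * J p k)
    = (\<Sum>p<N. \<Sum>q<p. (x q * y p - x p * y q) * (J q k * J p l - J q l * J p k))"
proof (induction N)
  case 0 then show ?case by simp
next
  case (Suc N)
  define A where "A = (\<Sum>p<N. x p * J p k)"
  define B where "B = (\<Sum>p<N. y p * J p l)"
  define C where "C = (\<Sum>p<N. x p * J p l)"
  define D where "D = (\<Sum>p<N. y p * J p k)"
  have inner: "(\<Sum>q<N. (x q * y N - x N * y q) * (J q k * J N l - J q l * J N k))
     = y N * J N l * A - y N * J N k * C - x N * J N l * D + x N * J N k * B"
  proof -
    have "(\<Sum>q<N. (x q * y N - x N * y q) * (J q k * J N l - J q l * J N k))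
      = (\<Sum>q<N. y N * J N l * (x q * J q k) - y N * J N k * (x q * J q l) - x N * J N l * (y q * J q k) + x N * J N k * (y q * J q l))"
      by (rule sum.cong) (simp_all add: algebra_simps)
    also have "\<dots> = y N * J N l * A - y N * J N k * C - x N * J N l * D + x N * J N k * B"
      by (simp add: A_def B_def C_def D_def sum.distrib sum_subtractf sum_distrib_left)
    finally show ?thesis .
  qed
  have "(\<Sum>p<Suc N. x p * J p k) * (\<Sum>p<Suc N. y p * J p l) - (\<Sum>p<Suc N. x p * J p l) * (\<Sum>p<Suc N. y p * J p k)
     = (A + x N * J N k) * (B + y N * J N l) - (C + x N * J N l) * (D + y N * J N k)"
    by (simp add: A_def B_def C_def D_def)
  also have "\<dots> = (A * B - C * D) + (y N * J N l * A - y N * J N k * C - x N * J N l * D + x N * J N k * B)"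
    by (simp add: algebra_simps)
  also have "A * B - C * D = (\<Sum>p<N. \<Sum>q<p. (x q * y p - x p * y q) * (J q k * J p l - J q l * J p k))"
    using Suc by (simp add: A_def B_def C_def D_def)
  finally show ?case using inner by simp
qed

lemma JJ_minor: assumes "q < p" "k < l" shows "nn (JJ q k * JJ p l - JJ q l * JJ p k)"
proof (cases "q = k \<and> p = Suc k \<and> l = Suc k")
  case True
  have "JJ q k * JJ p l - JJ q l * JJ p k = [:2,1:] * [:2,1:] - [:1,1:]"
    using True by (simp add: JJ_def)
  also have "\<dots> = [:3,3,1:]" by simp
  finally show ?thesis by (simp add: nn_def coeff_pCons split: nat.split)
next
  case False
  have z: "JJ q l * JJ p k = 0"
    using False assms by (auto simp: JJ_def)
  show ?thesis unfolding z diff_zero by (rule nn_mult[OF JJ_nn JJ_nn])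
qed

lemma tp2: "i < j \<Longrightarrow> k < l \<Longrightarrow> nn (bb i k * bb j l - bb i l * bb j k)"
proof (induction i arbitrary: j k l)
  case 0
  then have "bb 0 l = 0" by (simp add: bb_0)
  then show ?case by (simp add: nn_mult bb_nn)
next
  case (Suc i)
  then obtain j' where j: "j = Suc j'" and ij: "i < j'" by (cases j) auto
  define N where "N = Suc (Suc l)"
  have N1: "Suc k < N" "Suc l < N" using Suc.prems by (simp_all add: N_def)
  have "bb (Suc i) k * bb j l - bb (Suc i) l * bb j k =
     (\<Sum>p<N. bb i p * JJ p k) * (\<Sum>p<N. bb j' p * JJ p l) - (\<Sum>p<N. bb i p * JJ p l) * (\<Sum>p<N. bb j' p * JJ p k)"
    unfolding j using N1 by (simp add: row_sum[of k N] row_sum[of l N])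
  also have "\<dots> = (\<Sum>p<N. \<Sum>q<p. (bb i q * bb j' p - bb i p * bb j' q) * (JJ q k * JJ p l - JJ q l * JJ p k))"
    by (rule CB)
  finally have e: "bb (Suc i) k * bb j l - bb (Suc i) l * bb j k = \<dots>" .
  show ?case unfolding e
    by (intro nn_sum nn_mult Suc.IH JJ_minor ij Suc.prems) auto
qed



lemma coeff_qs: "coeff (q_schroeder n) j = (if j \<le> n then real ((2*n-j) choose j) * catalan (n-j) else 0)"
proof (cases "j \<le> n")
  case True
  have "coeff (q_schroeder n) j = (\<Sum>k=0..n. (if n - k = j then real ((n + k) choose (n - k)) * catalan k else 0))"
    unfolding q_schroeder_def coeff_sum by (simp add: coeff_monom)
  also have "\<dots> = (\<Sum>k=0..n. (if k = n - j then real ((n + k) choose (n - k)) * catalan k else 0))"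
    by (rule sum.cong) (use True in auto)
  also have "\<dots> = real ((n + (n-j)) choose (n - (n-j))) * catalan (n-j)"
    by (simp add: sum.delta)
  also have "\<dots> = real ((2*n-j) choose j) * catalan (n-j)"
  proof -
    have e: "n + (n-j) = 2*n-j" "n - (n-j) = j" using True by simp_all
    show ?thesis unfolding e ..
  qed
  finally show ?thesis using True by simp
next
  case False
  have "coeff (q_schroeder n) j = (\<Sum>k=0..n. (if n - k = j then real ((n + k) choose (n - k)) * catalan k else 0))"
    unfolding q_schroeder_def coeff_sum by (simp add: coeff_monom)
  also have "\<dots> = 0" by (rule sum.neutral) (use False in auto)
  finally show ?thesis using False by simp
qed

lemma coeff_t_mult: "coeff ([:1,1:] * (p::real poly)) j = coeff p j + (if j = 0 then 0 else coeff p (j-1))"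
  by (cases j) simp_all

lemma coeff_bb0: "coeff (bb m 0) j = real (Suc m choose j) * (if j \<le> m then real ((2*Suc m - j) choose (m-j)) else 0) / real (Suc m)"
  unfolding col0 coeff_smult coeff2_Phi_pow by simp

lemma cat0: "real (Suc m) * catalan (Suc m) = real ((2 * Suc m) choose m)"
proof -
  have a: "Suc m * ((2*m+2) choose Suc m) = (2*m+2) * ((2*m+1) choose m)"
    using binomial_absorption[of m "2*m+2"] by simp
  have b: "(2*m+2 - m) * ((2*m+2) choose m) = (2*m+2) * ((2*m+1) choose m)"
    using binomial_absorb_comp[of "2*m+2" m] by simp
  have c: "2*m+2-m = m + 2" by simp
  have "real (Suc m) * real ((2*m+2) choose Suc m) = real (m+2) * real ((2*m+2) choose m)"
    using a b c by (metis of_nat_mult)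
  then show ?thesis unfolding catalan_def by (simp add: field_simps)
qed

lemma qs_Suc: "q_schroeder (Suc m) = [:1,1:] * bb m 0"
proof (rule poly_eqI)
  fix j
  define g where "g j = real (Suc m choose j) * (if j \<le> m then real ((2*Suc m - j) choose (m-j)) else 0)" for j
  have rhs: "coeff ([:1,1:] * bb m 0) j = g j / real (Suc m) + (if j = 0 then 0 else g (j-1) / real (Suc m))"
    unfolding coeff_t_mult coeff_bb0 g_def by simp
  have "coeff (q_schroeder (Suc m)) j = g j / real (Suc m) + (if j = 0 then 0 else g (j-1) / real (Suc m))"
  proof (cases j)
    case 0
    then show ?thesis unfolding coeff_qs g_def using cat0[of m] by (simp add: field_simps)
  next
    case (Suc J)
    show ?thesis
    proof (cases "J \<le> m")
      case False
      then show ?thesis unfolding coeff_qs g_def Suc by (simp add: binomial_eq_0)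
    next
      case True
      show ?thesis
      proof (cases "J = m")
        case True
        then show ?thesis unfolding coeff_qs g_def Suc by (simp add: catalan_def)
      next
        case False
        with True obtain p where mp: "m = J + 1 + p" by (metis add.commute le_Suc_ex le_neq_implies_less Suc_leI add_Suc_right plus_1_eq_Suc)
        have e1: "2 * Suc m - Suc J = 2*p+J+3" "Suc m - Suc J = p + 1" "2 * Suc m - J = 2*p+J+4" "m - J = p + 1"
          "m - Suc J = p" "Suc m = p+J+2" using mp by simp_all
        have le: "Suc J \<le> Suc m" "Suc J \<le> m" "J \<le> m" using mp by simp_all
        have id: "real (p+J+2) * (real ((2*p+J+3) choose (J+1)) * catalan (p+1)) =
          real ((p+J+2) choose (J+1)) * real ((2*p+J+3) choose p) + real ((p+J+2) choose J) * real ((2*p+J+4) choose (p+1))"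
          by (rule ident_mid)
        have L: "coeff (q_schroeder (Suc m)) j = real ((2*p+J+3) choose (J+1)) * catalan (p+1)"
          unfolding coeff_qs Suc mp by (simp del: binomial_Suc_Suc add: ac_simps)
        have G1: "g j = real ((p+J+2) choose (J+1)) * real ((2*p+J+3) choose p)"
          unfolding g_def Suc mp by (simp del: binomial_Suc_Suc add: ac_simps)
        have G2: "g (j-1) = real ((p+J+2) choose J) * real ((2*p+J+4) choose (p+1))"
          unfolding g_def Suc mp by (simp del: binomial_Suc_Suc add: ac_simps)
        have S: "real (Suc m) = real (p+J+2)" using mp by simp
        have pos: "real (p+J+2) > 0" by simp
        have X: "real ((2*p+J+3) choose (J+1)) * catalan (p+1) = (g j + g (j-1)) / real (p+J+2)"
          unfolding G1 G2 using pos by (subst eq_divide_eq) (use id in \<open>simp del: binomial_Suc_Suc add: ac_simps\<close>)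
        show ?thesis unfolding L S X using Suc by (simp add: add_divide_distrib)
      qed
    qed
  qed
  then show "coeff (q_schroeder (Suc m)) j = coeff ([:1,1:] * bb m 0) j" using rhs by simp
qed

lemma alg4:
  fixes A B C D E c d t :: "'a::comm_ring_1"
  assumes hC: "C = c*A + d*B" and hE: "E = c*C + d*D"
  shows "(t*A)*(t*E) - (t*C)^2 = (t*t*d)*(A*D - B*C)"
proof -
  have "(t*A)*(t*E) - (t*C)^2 = t*t*(A*E - C*C)" by (simp add: algebra_simps power2_eq_square)
  also have "A*E - C*C = A*(c*C+d*D) - C*(c*A+d*B)" using hE hC by simp
  also have "\<dots> = d*(A*D - B*C)" by (simp add: algebra_simps)
  finally show ?thesis by (simp add: algebra_simps)
qed

lemma qs_0: "q_schroeder 0 = 1"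
  by (simp add: q_schroeder_def catalan_def)

theorem corollary4p10:
  shows "q_log_convex q_schroeder"
  unfolding q_log_convex_def q_le_def
proof (intro allI impI)
  fix n i :: nat
  assume "n \<ge> 1"
  then obtain n' where n: "n = Suc n'" by (cases n) auto
  have "nn (q_schroeder (n - 1) * q_schroeder (n + 1) - (q_schroeder n)^2)"
  proof (cases n')
    case 0
    have b10: "bb 1 0 = [:2,1:]" by (simp add: bb_Suc[of 0] bb_0)
    have "q_schroeder (n - 1) * q_schroeder (n + 1) - (q_schroeder n)^2 = [:1,1:] * [:2,1:] - [:1,1:] * [:1,1:]"
      unfolding n 0 using qs_Suc[of 0] qs_Suc[of 1] qs_0 b10 by (simp add: bb_0 power2_eq_square)
    also have "\<dots> = [:1,1:]" by simp
    finally show ?thesis by (simp add: nn_lin)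
  next
    case (Suc m)
    define A where "A = bb m 0"
    define B where "B = bb m 1"
    define C where "C = bb (Suc m) 0"
    define D where "D = bb (Suc m) 1"
    define E where "E = bb (Suc (Suc m)) 0"
    have hE: "E = [:2,1:] * C + [:1,1:] * D" unfolding E_def C_def D_def by (simp add: bb_Suc[of "Suc m"])
    have hC: "C = [:2,1:] * A + [:1,1:] * B" unfolding A_def B_def C_def by (simp add: bb_Suc[of m])
    have "q_schroeder (n - 1) * q_schroeder (n + 1) - (q_schroeder n)^2 = ([:1,1:] * A) * ([:1,1:] * E) - ([:1,1:] * C)^2"
      unfolding n Suc A_def C_def E_def using qs_Suc[of m] qs_Suc[of "Suc m"] qs_Suc[of "Suc (Suc m)"] by simp
    also have "\<dots> = ([:1,1:] * [:1,1:] * [:1,1:]) * (A * D - B * C)"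
      by (rule alg4[OF hC hE])
    finally have eq: "q_schroeder (n - 1) * q_schroeder (n + 1) - (q_schroeder n)^2 = ([:1,1:] * [:1,1:] * [:1,1:]) * (A * D - B * C)" .
    have "nn (A * D - B * C)" unfolding A_def B_def C_def D_def by (rule tp2) auto
    then show ?thesis unfolding eq by (intro nn_mult nn_lin) auto
  qed
  then show "0 \<le> coeff (q_schroeder (n - 1) * q_schroeder (n + 1) - (q_schroeder n)^2) i"
    by (simp add: nn_def)
qed

end
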